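(* Consider the ViSE model described in the context, with $n$ participants, $\ell$ egoists and $g=n-\ell$ group members ($1\le \ell\le n-1$), environment parameters $\mu\in\mathbb{R}$, $\sigma>0$, majority threshold $\alpha\in[0,1]$ and group claims threshold $t\in\mathbb{R}$. Let $\gamma=\alpha+\delta-1$ with $\delta=\ell/n$, $P=F\!\left(\frac{(\mu-t)\sqrt{g}}{\sigma}\right)$, $Q=1-P$, $f_0=f\!\left(\frac{(\mu-t)\sqrt{g}}{\sigma}\right)$. Then the mathematical expectation of the capital increment $\widetilde{d}_{\mathcal{G}}$ of a group member in one voting step is $$\mathrm{M}(\widetilde{d}_{\mathcal{G}})=F_{\gamma n}\left(\mu P+\frac{\sigma f_0}{\sqrt g}\right)+F_{\alpha n}\left(\mu Q-\frac{\sigma f_0}{\sqrt g}\right).$$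
   Context: ViSE model (one voting step). A society consists of $n$ participants: $\ell$ "egoists" and $g=n-\ell$ "group members", with $1\le\ell\le n-1$; $\delta=\ell/n$. Fix $\mu\in\mathbb{R}$, $\sigma>0$, a majority threshold $\alpha\in[0,1]$ and a group claims threshold $t\in\mathbb{R}$. A proposal is a random vector $(\zeta_1,\dots,\zeta_n)$ of independent $N(\mu,\sigma^2)$ random variables, $\zeta_i$ being the proposed capital increment of participant $i$. Each egoist votes for the proposal iff his own component is strictly positive. All group members vote for the proposal iff the arithmetic mean of the group members' components is strictly greater than $t$; otherwise they all vote against. The proposal is accepted iff the number of votes for it is strictly greater than $\alpha n$. If accepted, each participant's capital increment equals his component; otherwise it is $0$. $F$ and $f$ denote the standard normal distribution function and density. Let $p=F(\mu/\sigma)$, $q=1-p$, and for real $\xi$ let $F_\xi=\sum_{x=\max(0,[\xi]+1)}^{\ell}\binom{\ell}{x}p^xq^{\ell-x}$ (with $[\xi]$ the integer part of $\xi$ and an empty sum equal to $0$), i.e. $F_\xi$ is the probability that the number of egoists' votes for the proposal exceeds $\xi$. *)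

theory Defs
  imports "HOL-Probability.Probability"
begin

definition Phi :: "real \<Rightarrow> real" where
  "Phi = cdf (density lborel std_normal_density)"

abbreviation phi :: "real \<Rightarrow> real" where
  "phi \<equiv> std_normal_density"

(* Participants are indexed 0..n-1; egoists are {..<l}, group members are {l..<n}.
   A proposal is a point of the product of n independent N(mu, sigma^2) distributions. *)
definition vise_proposal :: "nat \<Rightarrow> real \<Rightarrow> real \<Rightarrow> (nat \<Rightarrow> real) measure" where
  "vise_proposal n \<mu> \<sigma> = PiM {..<n} (\<lambda>_. density lborel (normal_density \<mu> \<sigma>))"

definition vise_votes :: "nat \<Rightarrow> nat \<Rightarrow> real \<Rightarrow> (nat \<Rightarrow> real) \<Rightarrow> nat" where
  "vise_votes n l t \<zeta> =
     card {i \<in> {..<l}. \<zeta> i > 0}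
     + (if (\<Sum>i\<in>{l..<n}. \<zeta> i) / real (n - l) > t then n - l else 0)"

definition vise_accepted :: "nat \<Rightarrow> nat \<Rightarrow> real \<Rightarrow> real \<Rightarrow> (nat \<Rightarrow> real) \<Rightarrow> bool" where
  "vise_accepted n l \<alpha> t \<zeta> \<longleftrightarrow> real (vise_votes n l t \<zeta>) > \<alpha> * real n"

definition vise_increment :: "nat \<Rightarrow> nat \<Rightarrow> real \<Rightarrow> real \<Rightarrow> nat \<Rightarrow> (nat \<Rightarrow> real) \<Rightarrow> real" where
  "vise_increment n l \<alpha> t j \<zeta> = (if vise_accepted n l \<alpha> t \<zeta> then \<zeta> j else 0)"

definition F_xi :: "nat \<Rightarrow> real \<Rightarrow> real \<Rightarrow> real" where
  "F_xi l p \<xi> = (\<Sum>x = nat (max 0 (\<lfloor>\<xi>\<rfloor> + 1))..l. real (l choose x) * p ^ x * (1 - p) ^ (l - x))"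

end

theory Submission
  imports Defs "HOL-Real_Asymp.Real_Asymp"
begin


lemma std_deriv: "DERIV (\<lambda>x. - std_normal_density x) x :> x * std_normal_density x"
  unfolding std_normal_density_def
  by (auto intro!: derivative_eq_intros simp: field_simps)

lemma std_lim: "((\<lambda>x. - std_normal_density x) \<longlongrightarrow> 0) at_top"
unfolding std_normal_density_def by real_asymp

lemma std_B_nonneg:
  assumes "0 \<le> a"
  shows "has_bochner_integral lborel (\<lambda>x. x * std_normal_density x * indicator {a..} x) (std_normal_density a)"
proof -
  have "(\<integral>\<^sup>+x. ennreal (x * std_normal_density x) * indicator {a..} x \<partial>lborel) = ennreal (0 - (- std_normal_density a))"
    by (rule nn_integral_FTC_atLeast[OF _ std_deriv _ std_lim]) (use assms in auto)
  then have "(\<integral>\<^sup>+x. ennreal (x * std_normal_density x * indicator {a..} x) \<partial>lborel) = ennreal (std_normal_density a)"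
    by (simp add: indicator_mult_ennreal mult.commute)
  then show ?thesis
    by (intro has_bochner_integral_nn_integral) (use assms in \<open>auto split: split_indicator\<close>)
qed

lemma std_B:
  "has_bochner_integral lborel (\<lambda>x. x * std_normal_density x * indicator {a..} x) (std_normal_density a)"
proof (cases "0 \<le> a")
  case True then show ?thesis by (rule std_B_nonneg)
next
  case False
  have 1: "has_bochner_integral lborel (\<lambda>x. x * std_normal_density x * indicator {a..0} x)
      ((- std_normal_density 0) - (- std_normal_density a))"
    proof (rule has_bochner_integral_FTC_Icc_real)
    show "DERIV (\<lambda>x. - std_normal_density x) x :> x * std_normal_density x" for x by (rule std_deriv)
    show "isCont (\<lambda>x. x * std_normal_density x) x" for x
      unfolding std_normal_density_def by (intro continuous_intros) auto
  qed (use False in auto)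
  have 2: "has_bochner_integral lborel (\<lambda>x. x * std_normal_density x * indicator {0..} x) (std_normal_density 0)"
    by (rule std_B_nonneg) simp
  have "has_bochner_integral lborel (\<lambda>x. x * std_normal_density x * indicator {a..0} x + x * std_normal_density x * indicator {0..} x)
     ((- std_normal_density 0) - (- std_normal_density a) + std_normal_density 0)"
    by (rule has_bochner_integral_add[OF 1 2])
  moreover have "(\<lambda>x. x * std_normal_density x * indicator {a..0} x + x * std_normal_density x * indicator {0..} x)
     = (\<lambda>x. x * std_normal_density x * indicator {a..} x)"
    using False by (auto simp: fun_eq_iff split: split_indicator)
  ultimately show ?thesis by simp
qed

lemma std_sym: "std_normal_density (- x) = std_normal_density x"
  by (simp add: std_normal_density_def)

lemma std_A:
  "has_bochner_integral lborel (\<lambda>x. std_normal_density x * indicator {a..} x) (Phi (- a))"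
proof -
  have int: "integrable lborel (\<lambda>x. std_normal_density x * indicator {..- a} x)"
    by (intro integrable_real_mult_indicator) auto
  have "Phi (- a) = measure (density lborel std_normal_density) {..- a}"
    by (simp add: Phi_def cdf_def)
  also have "\<dots> = (\<integral>x. indicator {..- a} x \<partial>density lborel std_normal_density)"
    by simp
  also have "\<dots> = (\<integral>x. std_normal_density x * indicator {..- a} x \<partial>lborel)"
    by (subst integral_density) auto
  also have "\<dots> = (\<integral>x. std_normal_density (0 + -1 * x) * indicator {..- a} (0 + -1 * x) \<partial>lborel)"
    by (subst lborel_integral_real_affine[where c="-1" and t=0]) auto
  also have "\<dots> = (\<integral>x. std_normal_density x * indicator {a..} x \<partial>lborel)"
    by (intro Bochner_Integration.integral_cong) (auto simp: std_sym split: split_indicator)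
  finally have eq: "(\<integral>x. std_normal_density x * indicator {a..} x \<partial>lborel) = Phi (- a)" ..
  have "integrable lborel (\<lambda>x. std_normal_density x * indicator {a..} x)"
    by (intro integrable_real_mult_indicator) auto
  then show ?thesis using eq by (simp add: has_bochner_integral_iff)
qed

lemma nd_affine:
  assumes "s > 0"
  shows "normal_density m s (m + s * u) = std_normal_density u / s"
proof -
  have "sqrt (2 * pi * s\<^sup>2) = sqrt (2 * pi) * s"
    using assms by (simp add: real_sqrt_mult)
  moreover have "(s * u)\<^sup>2 / (2 * s\<^sup>2) = u\<^sup>2 / 2"
    using assms by (simp add: power_mult_distrib field_simps)
  ultimately show ?thesis
    by (simp add: normal_density_def)
qed

lemma nd_affine':
  assumes "s > 0"
  shows "normal_density m s (m + u * s) = std_normal_density u / s"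
  using nd_affine[OF assms, of m u] by (simp add: mult.commute)

lemma std_A_strict:
  "(\<integral>x. std_normal_density x * indicator {a<..} x \<partial>lborel) = Phi (- a)"
proof -
  have "(\<integral>x. std_normal_density x * indicator {a<..} x \<partial>lborel) = (\<integral>x. std_normal_density x * indicator {a..} x \<partial>lborel)"
    by (intro integral_cong_AE) (auto intro!: eventually_mono[OF AE_lborel_singleton[of a]] split: split_indicator)
  then show ?thesis using std_A[of a] by (simp add: has_bochner_integral_iff)
qed

lemma std_B_strict:
  "(\<integral>x. x * std_normal_density x * indicator {a<..} x \<partial>lborel) = std_normal_density a"
proof -
  have "(\<integral>x. x * std_normal_density x * indicator {a<..} x \<partial>lborel) = (\<integral>x. x * std_normal_density x * indicator {a..} x \<partial>lborel)"
    by (intro integral_cong_AE) (auto intro!: eventually_mono[OF AE_lborel_singleton[of a]] split: split_indicator)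
  then show ?thesis using std_B[of a] by (simp add: has_bochner_integral_iff)
qed

lemma norm_A:
  assumes s: "s > 0"
  shows "(\<integral>x. normal_density m s x * indicator {c<..} x \<partial>lborel) = Phi ((m - c) / s)"
proof -
  have "(\<integral>x. normal_density m s x * indicator {c<..} x \<partial>lborel)
      = \<bar>s\<bar> *\<^sub>R (\<integral>x. normal_density m s (m + s * x) * indicator {c<..} (m + s * x) \<partial>lborel)"
    using s by (subst lborel_integral_real_affine[where c=s and t=m]) auto
  also have "\<dots> = (\<integral>x. s * (normal_density m s (m + s * x) * indicator {c<..} (m + s * x)) \<partial>lborel)"
    using s by simp
  also have "\<dots> = (\<integral>x. std_normal_density x * indicator {(c - m) / s<..} x \<partial>lborel)"
    using s by (intro Bochner_Integration.integral_cong) (auto simp: nd_affine nd_affine' field_simps split: split_indicator)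
  also have "\<dots> = Phi ((m - c) / s)"
    by (simp add: std_A_strict minus_divide_left)
  finally show ?thesis .
qed

lemma norm_B:
  assumes s: "s > 0"
  shows "(\<integral>x. normal_density m s x * (x * indicator {c<..} x) \<partial>lborel)
     = m * Phi ((m - c) / s) + s * std_normal_density ((m - c) / s)"
proof -
  define a where "a = (c - m) / s"
  have i1: "integrable lborel (\<lambda>x. std_normal_density x * indicator {a<..} x)"
    by (intro integrable_real_mult_indicator) auto
  have "integrable lborel (\<lambda>x. std_normal_density x * x ^ 1)"
    by (rule integrable_std_normal_moment)
  then have i2: "integrable lborel (\<lambda>x. x * std_normal_density x * indicator {a<..} x)"
    by (intro integrable_real_mult_indicator) (auto simp: mult.commute)
  have "(\<integral>x. normal_density m s x * (x * indicator {c<..} x) \<partial>lborel)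
      = \<bar>s\<bar> *\<^sub>R (\<integral>x. normal_density m s (m + s * x) * ((m + s * x) * indicator {c<..} (m + s * x)) \<partial>lborel)"
    using s by (subst lborel_integral_real_affine[where c=s and t=m]) auto
  also have "\<dots> = (\<integral>x. s * (normal_density m s (m + s * x) * ((m + s * x) * indicator {c<..} (m + s * x))) \<partial>lborel)"
    using s by simp
  also have "\<dots> = (\<integral>x. m * (std_normal_density x * indicator {a<..} x) + s * (x * std_normal_density x * indicator {a<..} x) \<partial>lborel)"
    using s unfolding a_def
    by (intro Bochner_Integration.integral_cong) (auto simp: nd_affine nd_affine' field_simps split: split_indicator)
  also have "\<dots> = m * (\<integral>x. std_normal_density x * indicator {a<..} x \<partial>lborel) + s * (\<integral>x. x * std_normal_density x * indicator {a<..} x \<partial>lborel)"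
    using i1 i2 by simp
  also have "\<dots> = m * Phi (- a) + s * std_normal_density a"
    by (simp add: std_A_strict std_B_strict)
  also have "\<dots> = m * Phi ((m - c) / s) + s * std_normal_density ((m - c) / s)"
    unfolding a_def by (metis minus_diff_eq minus_divide_left std_sym)
  finally show ?thesis .
qed



lemma coord_indep:
  fixes I :: "nat set" and N :: "real measure"
  assumes N: "prob_space N" and sN: "sets N = sets borel" and I: "I \<noteq> {}"
  shows "prob_space.indep_vars (PiM I (\<lambda>_. N)) (\<lambda>_. borel) (\<lambda>i \<omega>. \<omega> i) I"
proof -
  interpret product_prob_space "\<lambda>_. N" I
    using N by (simp add: product_prob_space_def product_prob_space_axioms_def product_sigma_finite_def prob_space_imp_sigma_finite)
  have PS: "prob_space (PiM I (\<lambda>_. N))"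
    using N by (rule prob_space_PiM)
  have mc: "(\<lambda>\<omega>. \<omega> i) \<in> measurable (PiM I (\<lambda>_. N)) borel" if "i \<in> I" for i
    using measurable_component_singleton[OF that, of "\<lambda>_. N"] measurable_cong_sets[OF refl sN, of "PiM I (\<lambda>_. N)"]
    by blast
  show ?thesis
  proof (subst prob_space.indep_vars_iff_distr_eq_PiM'[OF PS I])
    show "random_variable borel (\<lambda>\<omega>. \<omega> i)" if "i \<in> I" for i using mc[OF that] by simp
    have 1: "distr (PiM I (\<lambda>_. N)) borel (\<lambda>\<omega>. \<omega> i) = N" if "i \<in> I" for i
    proof -
      have "distr (PiM I (\<lambda>_. N)) borel (\<lambda>\<omega>. \<omega> i) = distr (PiM I (\<lambda>_. N)) N (\<lambda>\<omega>. \<omega> i)"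
        by (rule distr_cong) (simp_all add: sN)
      also have "\<dots> = N" using PiM_component[OF that] .
      finally show ?thesis .
    qed
    have "distr (PiM I (\<lambda>_. N)) (PiM I (\<lambda>i. borel)) (\<lambda>x. \<lambda>i\<in>I. x i) = distr (PiM I (\<lambda>_. N)) (PiM I (\<lambda>_. N)) (\<lambda>x. x)"
      by (rule distr_cong) (auto simp: sN space_PiM intro!: sets_PiM_cong)
    also have "\<dots> = PiM I (\<lambda>_. N)" by simp
    also have "\<dots> = PiM I (\<lambda>i. distr (PiM I (\<lambda>_. N)) borel (\<lambda>\<omega>. \<omega> i))"
      by (rule PiM_cong) (auto simp: 1)
    finally show "distr (PiM I (\<lambda>_. N)) (PiM I (\<lambda>i. borel)) (\<lambda>x. \<lambda>i\<in>I. x i) = PiM I (\<lambda>i. distr (PiM I (\<lambda>_. N)) borel (\<lambda>\<omega>. \<omega> i))" .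
  qed
qed


definition swp :: "nat \<Rightarrow> nat \<Rightarrow> nat \<Rightarrow> nat" where
  "swp i j k = (if k = i then j else if k = j then i else k)"

lemma swp_inv[simp]: "swp i j (swp i j k) = k"
  by (auto simp: swp_def)

lemma swp_in: "i \<in> A \<Longrightarrow> j \<in> A \<Longrightarrow> k \<in> A \<Longrightarrow> swp i j k \<in> A"
  by (auto simp: swp_def)

lemma sum_swp: "i \<in> A \<Longrightarrow> j \<in> A \<Longrightarrow> (\<Sum>k\<in>A. f (swp i j k)) = (\<Sum>k\<in>A. (f k :: real))"
  by (rule sum.reindex_bij_witness[where i="swp i j" and j="swp i j"]) (auto intro: swp_in)

lemma meas_transfer:
  assumes sN: "sets N = sets borel"
  shows "measurable (PiM I (\<lambda>_. N)) K = measurable (PiM I (\<lambda>_. borel)) K"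
  by (rule measurable_cong_sets) (auto intro!: sets_PiM_cong simp: sN)

lemma swap_integral:
  fixes N :: "real measure" and h :: "(nat \<Rightarrow> real) \<Rightarrow> real"
  assumes N: "prob_space N" and sN: "sets N = sets borel" and ij: "i \<in> I" "j \<in> I"
    and h: "h \<in> borel_measurable (PiM I (\<lambda>_. borel))"
  shows "(\<integral>\<omega>. h \<omega> \<partial>PiM I (\<lambda>_. N)) = (\<integral>\<omega>. h (\<lambda>k\<in>I. \<omega> (swp i j k)) \<partial>PiM I (\<lambda>_. N))"
proof -
  have inj: "inj_on (swp i j) I" by (metis inj_on_inverseI swp_inv)
  have fI: "swp i j \<in> I \<rightarrow> I" using ij by (auto intro: swp_in)
  have D: "distr (PiM I (\<lambda>_. N)) (PiM I (\<lambda>_. N)) (\<lambda>\<omega>. \<lambda>k\<in>I. \<omega> (swp i j k)) = PiM I (\<lambda>_. N)"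
    using distr_PiM_reindex[of I "\<lambda>_. N", OF N inj fI] by simp
  have T: "(\<lambda>\<omega>. \<lambda>k\<in>I. \<omega> (swp i j k)) \<in> measurable (PiM I (\<lambda>_. N)) (PiM I (\<lambda>_. N))"
    using fI by (intro measurable_restrict measurable_component_singleton) auto
  have h': "h \<in> borel_measurable (PiM I (\<lambda>_. N))"
    using h meas_transfer[OF sN] by blast
  have "(\<integral>\<omega>. h \<omega> \<partial>PiM I (\<lambda>_. N)) = (\<integral>\<omega>. h \<omega> \<partial>distr (PiM I (\<lambda>_. N)) (PiM I (\<lambda>_. N)) (\<lambda>\<omega>. \<lambda>k\<in>I. \<omega> (swp i j k)))"
    by (simp add: D)
  also have "\<dots> = (\<integral>\<omega>. h (\<lambda>k\<in>I. \<omega> (swp i j k)) \<partial>PiM I (\<lambda>_. N))"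
    by (rule integral_distr[OF T h'])
  finally show ?thesis .
qed



lemma group_exp:
  fixes n l j :: nat and \<mu> \<sigma> c :: real
  assumes s: "\<sigma> > 0" and ln: "l < n" and j: "l \<le> j" "j < n"
  shows "(\<integral>\<omega>. (if c < (\<Sum>k\<in>{l..<n}. \<omega> k) then \<omega> j else 0) \<partial>PiM {..<n} (\<lambda>_. density lborel (normal_density \<mu> \<sigma>)))
    = (real (n - l) * \<mu> * Phi ((real (n - l) * \<mu> - c) / (\<sigma> * sqrt (real (n - l))))
       + \<sigma> * sqrt (real (n - l)) * std_normal_density ((real (n - l) * \<mu> - c) / (\<sigma> * sqrt (real (n - l))))) / real (n - l)"
proof -
  define N where "N = density lborel (normal_density \<mu> \<sigma>)"
  define M where "M = PiM {..<n} (\<lambda>_. N)"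
  define G where "G = {l..<n}"
  define g where "g = n - l"
  have g0: "g > 0" using ln by (simp add: g_def)
  have cardG: "card G = g" by (simp add: G_def g_def)
  have GI: "G \<subseteq> {..<n}" by (auto simp: G_def)
  have PN: "prob_space N" unfolding N_def using s by (intro prob_space_normal_density)
  have sN: "sets N = sets borel" using s by (simp add: N_def)
  interpret product_prob_space "\<lambda>_. N" "{..<n}"
    using PN by (simp add: product_prob_space_def product_prob_space_axioms_def product_sigma_finite_def prob_space_imp_sigma_finite)
  have PS: "prob_space M" unfolding M_def using PN by (rule prob_space_PiM)
  have mc: "(\<lambda>\<omega>. \<omega> i) \<in> borel_measurable M" if "i < n" for i
    using measurable_component_singleton[of i "{..<n}" "\<lambda>_. N"] measurable_cong_sets[OF refl sN, of M] that
    unfolding M_def by blast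
  have cd: "distributed M lborel (\<lambda>\<omega>. \<omega> i) (normal_density \<mu> \<sigma>)" if "i < n" for i
  proof -
    have "distr M lborel (\<lambda>\<omega>. \<omega> i) = distr M N (\<lambda>\<omega>. \<omega> i)"
      by (rule distr_cong) (simp_all add: sN)
    also have "\<dots> = N" unfolding M_def by (rule PiM_component) (use that in simp)
    finally show ?thesis
      unfolding distributed_def using mc[OF that] by (simp add: N_def)
  qed
  have ci: "integrable M (\<lambda>\<omega>. \<omega> i)" if "i < n" for i
    using distributed_integrable[OF cd[OF that], of "\<lambda>x. x"] integrable_normal_moment_nz_1[OF s] by simp
  have ind: "prob_space.indep_vars M (\<lambda>_. borel) (\<lambda>i \<omega>. \<omega> i) {..<n}"
    unfolding M_def by (rule coord_indep[OF PN sN]) (use ln in auto)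
  have Sd: "distributed M lborel (\<lambda>\<omega>. \<Sum>i\<in>G. \<omega> i) (normal_density (\<Sum>i\<in>G. \<mu>) (sqrt (\<Sum>i\<in>G. \<sigma>\<^sup>2)))"
    by (rule prob_space.sum_indep_normal[OF PS])
       (use ln s GI in \<open>auto simp: G_def intro: prob_space.indep_vars_subset[OF PS ind] cd\<close>)
  define h where "h i \<omega> = (if c < (\<Sum>k\<in>G. \<omega> k) then \<omega> i else 0)" for i and \<omega> :: "nat \<Rightarrow> real"
  have hm: "h i \<in> borel_measurable (PiM {..<n} (\<lambda>_. borel))" if "i < n" for i
  proof -
    have [measurable]: "(\<lambda>\<omega>::nat\<Rightarrow>real. \<Sum>k\<in>G. \<omega> k) \<in> borel_measurable (PiM {..<n} (\<lambda>_. borel))"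
    proof -
      have "(\<lambda>\<omega>::nat\<Rightarrow>real. \<omega> i) \<in> borel_measurable (PiM {..<n} (\<lambda>_. borel))" if "i \<in> G" for i
        using GI that by (intro measurable_component_singleton) auto
      then show ?thesis by (rule borel_measurable_sum[of G "\<lambda>k \<omega>. \<omega> k"])
    qed
    have [measurable]: "(\<lambda>\<omega>::nat\<Rightarrow>real. \<omega> i) \<in> borel_measurable (PiM {..<n} (\<lambda>_. borel))"
      using that by (auto intro!: measurable_component_singleton)
    show ?thesis unfolding h_def by measurable
  qed
  have hM: "h i \<in> borel_measurable M" if "i < n" for i
    using hm[OF that] meas_transfer[OF sN] unfolding M_def by blast
  have hint: "integrable M (h i)" if "i < n" for i
    by (rule Bochner_Integration.integrable_bound[OF ci[OF that] hM[OF that]]) (auto simp: h_def)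
  have sym: "integral\<^sup>L M (h i) = integral\<^sup>L M (h j)" if "i \<in> G" for i
  proof -
    have iI: "i \<in> {..<n}" "j \<in> {..<n}" using that j GI by auto
    have jG: "j \<in> G" using j by (simp add: G_def)
    have "integral\<^sup>L M (h i) = (\<integral>\<omega>. h i (\<lambda>k\<in>{..<n}. \<omega> (swp i j k)) \<partial>M)"
      unfolding M_def by (rule swap_integral[OF PN sN iI hm]) (use iI in simp)
    also have "\<dots> = integral\<^sup>L M (h j)"
    proof (rule Bochner_Integration.integral_cong[OF refl])
      fix \<omega> :: "nat \<Rightarrow> real"
      have "(\<Sum>k\<in>G. (\<lambda>k\<in>{..<n}. \<omega> (swp i j k)) k) = (\<Sum>k\<in>G. \<omega> (swp i j k))"
        using GI by (intro sum.cong) auto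
      also have "\<dots> = (\<Sum>k\<in>G. \<omega> k)" by (rule sum_swp[OF that jG])
      finally show "h i (\<lambda>k\<in>{..<n}. \<omega> (swp i j k)) = h j \<omega>"
        using iI by (simp add: h_def swp_def)
    qed
    finally show ?thesis .
  qed
  have "real g * integral\<^sup>L M (h j) = (\<Sum>i\<in>G. integral\<^sup>L M (h i))"
    using sym cardG by simp
  also have "\<dots> = (\<integral>\<omega>. (\<Sum>i\<in>G. h i \<omega>) \<partial>M)"
    using hint GI by (subst Bochner_Integration.integral_sum) auto
  also have "\<dots> = (\<integral>\<omega>. (\<lambda>x. x * indicator {c<..} x) (\<Sum>k\<in>G. \<omega> k) \<partial>M)"
    by (intro Bochner_Integration.integral_cong) (auto simp: h_def split: split_indicator)
  also have "\<dots> = (\<integral>x. normal_density (\<Sum>i\<in>G. \<mu>) (sqrt (\<Sum>i\<in>G. \<sigma>\<^sup>2)) x * (x * indicator {c<..} x) \<partial>lborel)"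
    by (rule distributed_integral[OF Sd, symmetric]) auto
  also have "\<dots> = (\<Sum>i\<in>G. \<mu>) * Phi (((\<Sum>i\<in>G. \<mu>) - c) / sqrt (\<Sum>i\<in>G. \<sigma>\<^sup>2))
       + sqrt (\<Sum>i\<in>G. \<sigma>\<^sup>2) * std_normal_density (((\<Sum>i\<in>G. \<mu>) - c) / sqrt (\<Sum>i\<in>G. \<sigma>\<^sup>2))"
    by (rule norm_B) (use s g0 cardG in simp)
  also have "sqrt (\<Sum>i\<in>G. \<sigma>\<^sup>2) = \<sigma> * sqrt (real g)"
    using s cardG by (simp add: real_sqrt_mult)
  also have "(\<Sum>i\<in>G. \<mu>) = real g * \<mu>" using cardG by simp
  finally have "real g * integral\<^sup>L M (h j) = real g * \<mu> * Phi ((real g * \<mu> - c) / (\<sigma> * sqrt (real g)))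
       + \<sigma> * sqrt (real g) * std_normal_density ((real g * \<mu> - c) / (\<sigma> * sqrt (real g)))" .
  then have "integral\<^sup>L M (h j) = (real g * \<mu> * Phi ((real g * \<mu> - c) / (\<sigma> * sqrt (real g)))
       + \<sigma> * sqrt (real g) * std_normal_density ((real g * \<mu> - c) / (\<sigma> * sqrt (real g)))) / real g"
    using g0 by (simp add: field_simps)
  then show ?thesis unfolding h_def M_def N_def G_def g_def .
qed



lemma xi_iff: "\<xi> < real k \<longleftrightarrow> nat (max 0 (\<lfloor>\<xi>\<rfloor> + 1)) \<le> k"
proof -
  have "\<xi> < real k \<longleftrightarrow> \<lfloor>\<xi>\<rfloor> < int k"
    by (metis floor_less_iff of_int_of_nat_eq)
  then show ?thesis by linarith
qed

lemma binom_sum: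
  fixes \<xi> p :: real and l :: nat
  shows "(\<Sum>A\<in>{A. A \<subseteq> {..<l} \<and> \<xi> < real (card A)}. p ^ card A * (1 - p) ^ (l - card A)) = F_xi l p \<xi>"
proof -
  define S where "S = {A. A \<subseteq> {..<l} \<and> \<xi> < real (card A)}"
  define k0 where "k0 = nat (max 0 (\<lfloor>\<xi>\<rfloor> + 1))"
  have fS: "finite S" unfolding S_def by (rule finite_subset[of _ "Pow {..<l}"]) auto
  have cl: "card A \<le> l" if "A \<subseteq> {..<l}" for A
    using card_mono[OF _ that] by simp
  have im: "card ` S \<subseteq> {k0..l}"
    using cl xi_iff unfolding S_def k0_def by auto
  have "(\<Sum>A\<in>S. p ^ card A * (1 - p) ^ (l - card A))
      = (\<Sum>k\<in>{k0..l}. \<Sum>A\<in>{A. A \<in> S \<and> card A = k}. p ^ card A * (1 - p) ^ (l - card A))"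
    by (rule sum.group[OF fS _ im, symmetric]) simp
  also have "\<dots> = (\<Sum>k\<in>{k0..l}. real (l choose k) * p ^ k * (1 - p) ^ (l - k))"
  proof (rule sum.cong[OF refl])
    fix k assume k: "k \<in> {k0..l}"
    have eq: "{A. A \<in> S \<and> card A = k} = {A. A \<subseteq> {..<l} \<and> card A = k}"
      using k xi_iff unfolding S_def k0_def by auto
    have "(\<Sum>A\<in>{A. A \<in> S \<and> card A = k}. p ^ card A * (1 - p) ^ (l - card A))
        = (\<Sum>A\<in>{A. A \<subseteq> {..<l} \<and> card A = k}. p ^ k * (1 - p) ^ (l - k))"
      unfolding eq by (rule sum.cong) auto
    also have "\<dots> = real (l choose k) * (p ^ k * (1 - p) ^ (l - k))"
      using n_subsets[of "{..<l}" k] by simp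
    finally show "(\<Sum>A\<in>{A. A \<in> S \<and> card A = k}. p ^ card A * (1 - p) ^ (l - card A))
        = real (l choose k) * p ^ k * (1 - p) ^ (l - k)" by simp
  qed
  finally show ?thesis unfolding S_def F_xi_def k0_def .
qed

lemma measure_pos:
  assumes s: "\<sigma> > 0"
  shows "measure (density lborel (normal_density \<mu> \<sigma>)) {0<..} = Phi (\<mu> / \<sigma>)"
proof -
  have "measure (density lborel (normal_density \<mu> \<sigma>)) {0<..} = (\<integral>x. indicator {0<..} x \<partial>density lborel (normal_density \<mu> \<sigma>))"
    by simp
  also have "\<dots> = (\<integral>x. normal_density \<mu> \<sigma> x * indicator {0<..} x \<partial>lborel)"
    by (subst integral_density) auto
  also have "\<dots> = Phi ((\<mu> - 0) / \<sigma>)" by (rule norm_A[OF s])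
  finally show ?thesis by simp
qed

lemma measure_nonpos:
  assumes s: "\<sigma> > 0"
  shows "measure (density lborel (normal_density \<mu> \<sigma>)) {..0} = 1 - Phi (\<mu> / \<sigma>)"
proof -
  interpret prob_space "density lborel (normal_density \<mu> \<sigma>)"
    using s by (intro prob_space_normal_density)
  have e: "{..0::real} = space (density lborel (normal_density \<mu> \<sigma>)) - {0<..}" by auto
  have "measure (density lborel (normal_density \<mu> \<sigma>)) {..0} = 1 - measure (density lborel (normal_density \<mu> \<sigma>)) {0<..}"
    unfolding e by (rule prob_compl) simp
  then show ?thesis using measure_pos[OF s] by simp
qed

lemma ego_exp:
  fixes n l :: nat and \<mu> \<sigma> \<xi> :: real
  assumes s: "\<sigma> > 0" and ln: "l \<le> n"
  shows "(\<integral>\<omega>. (if \<xi> < real (card {i \<in> {..<l}. 0 < \<omega> i}) then 1 else 0) \<partial>PiM {..<n} (\<lambda>_. density lborel (normal_density \<mu> \<sigma>)))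
     = F_xi l (Phi (\<mu> / \<sigma>)) \<xi>"
proof -
  define N where "N = density lborel (normal_density \<mu> \<sigma>)"
  define M where "M = PiM {..<n} (\<lambda>_. N)"
  define E where "E = {..<l}"
  define p where "p = Phi (\<mu> / \<sigma>)"
  define S where "S = {A. A \<subseteq> E \<and> \<xi> < real (card A)}"
  define C where "C A i = (if i \<in> A then {0<..} else {..0::real})" for A and i :: nat
  define B where "B A = prod_emb {..<n} (\<lambda>_. N) E (PiE E (C A))" for A
  have PN: "prob_space N" unfolding N_def using s by (intro prob_space_normal_density)
  have sN: "sets N = sets borel" using s by (simp add: N_def)
  interpret product_prob_space "\<lambda>_. N" "{..<n}"
    using PN by (simp add: product_prob_space_def product_prob_space_axioms_def product_sigma_finite_def prob_space_imp_sigma_finite)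
  have EI: "E \<subseteq> {..<n}" using ln by (auto simp: E_def)
  have fS: "finite S" unfolding S_def E_def by (rule finite_subset[of _ "Pow {..<l}"]) auto
  have CS: "C A i \<in> sets N" for A i by (simp add: C_def sN)
  have BS: "B A \<in> sets M" for A
    unfolding B_def M_def using EI CS by (intro sets_PiM_I) (auto simp: E_def)
  have ind: "indicator (B A) \<omega> = (if A = {i \<in> E. 0 < \<omega> i} then 1 else (0::real))"
    if "\<omega> \<in> space M" "A \<subseteq> E" for A \<omega>
  proof -
    have "\<omega> \<in> B A \<longleftrightarrow> (\<forall>i\<in>E. \<omega> i \<in> C A i)"
      using that(1) unfolding B_def M_def by (auto simp: prod_emb_iff space_PiM PiE_iff)
    also have "\<dots> \<longleftrightarrow> A = {i \<in> E. 0 < \<omega> i}"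
      using that(2) by (auto simp: C_def not_less)
    finally show ?thesis by (simp add: indicator_def)
  qed
  have "(\<integral>\<omega>. (if \<xi> < real (card {i \<in> {..<l}. 0 < \<omega> i}) then 1 else (0::real)) \<partial>M)
      = (\<integral>\<omega>. (\<Sum>A\<in>S. indicator (B A) \<omega>) \<partial>M)"
  proof (rule Bochner_Integration.integral_cong[OF refl])
    fix \<omega> assume w: "\<omega> \<in> space M"
    have "(\<Sum>A\<in>S. indicator (B A) \<omega>) = (\<Sum>A\<in>S. if A = {i \<in> E. 0 < \<omega> i} then 1 else (0::real))"
      by (rule sum.cong[OF refl]) (use w in \<open>auto simp: ind S_def\<close>)
    also have "\<dots> = (if {i \<in> E. 0 < \<omega> i} \<in> S then 1 else 0)"
      using sum.delta[OF fS, of "{i \<in> E. 0 < \<omega> i}" "\<lambda>_. (1::real)"] by simp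
    finally show "(if \<xi> < real (card {i \<in> {..<l}. 0 < \<omega> i}) then 1 else (0::real)) = (\<Sum>A\<in>S. indicator (B A) \<omega>)"
      by (simp add: S_def E_def subset_eq)
  qed
  also have "\<dots> = (\<Sum>A\<in>S. measure M (B A))"
  proof (subst Bochner_Integration.integral_sum)
    show "integrable M (indicator (B A) :: _ \<Rightarrow> real)" for A
      using BS[of A] by (intro integrable_real_indicator) (auto simp: M_def P.emeasure_eq_measure)
    show "(\<Sum>A\<in>S. integral\<^sup>L M (indicator (B A))) = (\<Sum>A\<in>S. measure M (B A))"
      using BS by (simp add: sets.Int_space_eq2)
  qed
  also have "\<dots> = (\<Sum>A\<in>S. p ^ card A * (1 - p) ^ (l - card A))"
  proof (rule sum.cong[OF refl])
    fix A assume A: "A \<in> S"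
    then have AE: "A \<subseteq> E" by (simp add: S_def)
    have fE: "finite E" by (simp add: E_def)
    have "measure M (B A) = (\<Prod>i\<in>E. measure N (C A i))"
      unfolding M_def B_def using EI CS by (intro measure_PiM_emb) (auto simp: E_def)
    also have "\<dots> = (\<Prod>i\<in>E. if i \<in> A then p else 1 - p)"
      by (intro prod.cong) (auto simp: C_def N_def p_def measure_pos[OF s] measure_nonpos[OF s])
    also have "\<dots> = p ^ card (E \<inter> A) * (1 - p) ^ card (E - A)"
      by (simp add: prod.If_cases[OF fE] Diff_eq)
    also have "card (E \<inter> A) = card A" using AE by (simp add: Int_absorb1)
    also have "card (E - A) = l - card A" using AE fE by (simp add: card_Diff_subset E_def finite_subset)
    finally show "measure M (B A) = p ^ card A * (1 - p) ^ (l - card A)" .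
  qed
  also have "\<dots> = F_xi l p \<xi>"
    unfolding S_def E_def by (rule binom_sum)
  finally show ?thesis unfolding M_def N_def p_def .
qed



lemma comp_meas: "i \<in> K \<Longrightarrow> (\<lambda>\<omega>::nat\<Rightarrow>real. \<omega> i) \<in> borel_measurable (PiM K (\<lambda>_. borel))"
  by (intro measurable_component_singleton) auto

lemma sum_meas: "G \<subseteq> K \<Longrightarrow> (\<lambda>\<omega>::nat\<Rightarrow>real. \<Sum>k\<in>G. \<omega> k) \<in> borel_measurable (PiM K (\<lambda>_. borel))"
proof -
  assume GK: "G \<subseteq> K"
  have "(\<lambda>\<omega>::nat\<Rightarrow>real. \<omega> i) \<in> borel_measurable (PiM K (\<lambda>_. borel))" if "i \<in> G" for i
    using GK that by (intro comp_meas) auto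
  then show ?thesis by (rule borel_measurable_sum[of G "\<lambda>k \<omega>. \<omega> k"])
qed

lemma card_meas:
  assumes "E \<subseteq> K" "finite E"
  shows "(\<lambda>\<omega>::nat\<Rightarrow>real. real (card {i \<in> E. 0 < \<omega> i})) \<in> borel_measurable (PiM K (\<lambda>_. borel))"
proof -
  have eq: "real (card {i \<in> E. 0 < \<omega> i}) = (\<Sum>i\<in>E. if 0 < \<omega> i then 1 else 0)" for \<omega> :: "nat \<Rightarrow> real"
    using assms(2) by (simp add: sum.If_cases Int_def)
  have [measurable]: "(\<lambda>\<omega>::nat\<Rightarrow>real. \<omega> i) \<in> borel_measurable (PiM K (\<lambda>_. borel))" if "i \<in> E" for i
    using assms that by (intro comp_meas) auto
  have "(\<lambda>\<omega>::nat\<Rightarrow>real. \<Sum>i\<in>E. (\<lambda>i \<omega>. if 0 < \<omega> i then 1 else (0::real)) i \<omega>) \<in> borel_measurable (PiM K (\<lambda>_. borel))"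
    by (rule borel_measurable_sum) measurable
  then show ?thesis unfolding eq by simp
qed

theorem proposition2:
  fixes n l j :: nat and \<mu> \<sigma> \<alpha> t :: real
  assumes "1 \<le> l" and "l \<le> n - 1"
    and "\<sigma> > 0" and "0 \<le> \<alpha>" and "\<alpha> \<le> 1"
    and "l \<le> j" and "j < n"
  shows "(let g = n - l; \<delta> = real l / real n; \<gamma> = \<alpha> + \<delta> - 1;
              p = Phi (\<mu> / \<sigma>);
              P = Phi ((\<mu> - t) * sqrt (real g) / \<sigma>); Q = 1 - P;
              f0 = phi ((\<mu> - t) * sqrt (real g) / \<sigma>)
          in integral\<^sup>L (vise_proposal n \<mu> \<sigma>) (vise_increment n l \<alpha> t j)
             = F_xi l p (\<gamma> * real n) * (\<mu> * P + \<sigma> * f0 / sqrt (real g))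
               + F_xi l p (\<alpha> * real n) * (\<mu> * Q - \<sigma> * f0 / sqrt (real g)))"
proof -
  note s = \<open>\<sigma> > 0\<close>
  have ln: "l < n" using assms(1,2) by linarith
  define N where "N = density lborel (normal_density \<mu> \<sigma>)"
  define M where "M = PiM {..<n} (\<lambda>_. N)"
  define G where "G = {l..<n}"
  define E where "E = {..<l}"
  define g where "g = n - l"
  define c where "c = t * real g"
  define p where "p = Phi (\<mu> / \<sigma>)"
  define y where "y = (\<mu> - t) * sqrt (real g) / \<sigma>"
  define \<gamma> where "\<gamma> = \<alpha> + real l / real n - 1"
  define H1 where "H1 \<omega> = (if c < (\<Sum>k\<in>G. \<omega> k) then \<omega> j else 0)" for \<omega> :: "nat \<Rightarrow> real"
  define H2 where "H2 \<omega> = (if c < (\<Sum>k\<in>G. \<omega> k) then 0 else \<omega> j)" for \<omega> :: "nat \<Rightarrow> real"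
  define A where "A \<omega> = (if \<gamma> * real n < real (card {i \<in> E. 0 < \<omega> i}) then 1 else (0::real))" for \<omega> :: "nat \<Rightarrow> real"
  define B where "B \<omega> = (if \<alpha> * real n < real (card {i \<in> E. 0 < \<omega> i}) then 1 else (0::real))" for \<omega> :: "nat \<Rightarrow> real"
  have g0: "g > 0" using ln by (simp add: g_def)
  have rg: "real g = real n - real l" using ln by (simp add: g_def of_nat_diff)
  have n0: "real n > 0" using ln by simp
  have GI: "G \<subseteq> {..<n}" by (auto simp: G_def)
  have EI: "E \<subseteq> {..<n}" using ln by (auto simp: E_def)
  have jG: "j \<in> G" using assms by (simp add: G_def)
  have fE: "finite E" by (simp add: E_def)
  have jI: "j \<in> {..<n}" using assms by simp
  have PN: "prob_space N" unfolding N_def using s by (intro prob_space_normal_density)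
  have sN: "sets N = sets borel" using s by (simp add: N_def)
  have PS: "prob_space M" unfolding M_def using PN by (rule prob_space_PiM)
  interpret P: prob_space M by (rule PS)
  have dec: "vise_increment n l \<alpha> t j \<omega> = H1 \<omega> * A \<omega> + H2 \<omega> * B \<omega>" for \<omega>
  proof -
    have mean: "(\<Sum>i\<in>{l..<n}. \<omega> i) / real (n - l) > t \<longleftrightarrow> c < (\<Sum>k\<in>G. \<omega> k)"
      using g0 by (simp add: c_def G_def g_def pos_less_divide_eq mult.commute)
    have gam: "\<gamma> * real n = \<alpha> * real n + real l - real n"
      using n0 by (simp add: \<gamma>_def field_simps)
    show ?thesis
      unfolding vise_increment_def vise_accepted_def vise_votes_def mean
      using gam rg by (auto simp: H1_def H2_def A_def B_def E_def g_def)
  qed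
  have mcb: "(\<lambda>\<omega>::nat\<Rightarrow>real. \<omega> i) \<in> borel_measurable M" if "i < n" for i
    using comp_meas[of i "{..<n}"] that meas_transfer[OF sN] unfolding M_def by blast
  have h1G: "(\<lambda>x::nat\<Rightarrow>real. if c < (\<Sum>k\<in>G. x k) then x j else 0) \<in> borel_measurable (PiM G (\<lambda>_. borel))"
  proof -
    note [measurable] = sum_meas[of G G] comp_meas[OF jG]
    show ?thesis by measurable
  qed
  have h2G: "(\<lambda>x::nat\<Rightarrow>real. if c < (\<Sum>k\<in>G. x k) then 0 else x j) \<in> borel_measurable (PiM G (\<lambda>_. borel))"
  proof -
    note [measurable] = sum_meas[of G G] comp_meas[OF jG]
    show ?thesis by measurable
  qed
  have aE: "(\<lambda>x::nat\<Rightarrow>real. if \<gamma> * real n < real (card {i \<in> E. 0 < x i}) then 1 else (0::real)) \<in> borel_measurable (PiM E (\<lambda>_. borel))"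
  proof -
    note [measurable] = card_meas[OF subset_refl fE]
    show ?thesis by measurable
  qed
  have bE: "(\<lambda>x::nat\<Rightarrow>real. if \<alpha> * real n < real (card {i \<in> E. 0 < x i}) then 1 else (0::real)) \<in> borel_measurable (PiM E (\<lambda>_. borel))"
  proof -
    note [measurable] = card_meas[OF subset_refl fE]
    show ?thesis by measurable
  qed
  have H1m: "H1 \<in> borel_measurable M"
  proof -
    note [measurable] = sum_meas[OF GI] comp_meas[OF jI]
    have "H1 \<in> borel_measurable (PiM {..<n} (\<lambda>_. borel))" unfolding H1_def by measurable
    then show ?thesis using meas_transfer[OF sN] unfolding M_def by blast
  qed
  have H2m: "H2 \<in> borel_measurable M"
  proof -
    note [measurable] = sum_meas[OF GI] comp_meas[OF jI]
    have "H2 \<in> borel_measurable (PiM {..<n} (\<lambda>_. borel))" unfolding H2_def by measurable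
    then show ?thesis using meas_transfer[OF sN] unfolding M_def by blast
  qed
  have Am: "A \<in> borel_measurable M"
  proof -
    note [measurable] = card_meas[OF EI fE]
    have "A \<in> borel_measurable (PiM {..<n} (\<lambda>_. borel))" unfolding A_def by measurable
    then show ?thesis using meas_transfer[OF sN] unfolding M_def by blast
  qed
  have Bm: "B \<in> borel_measurable M"
  proof -
    note [measurable] = card_meas[OF EI fE]
    have "B \<in> borel_measurable (PiM {..<n} (\<lambda>_. borel))" unfolding B_def by measurable
    then show ?thesis using meas_transfer[OF sN] unfolding M_def by blast
  qed
  have ind: "P.indep_vars (\<lambda>_. borel) (\<lambda>i \<omega>. \<omega> i) {..<n}"
    unfolding M_def by (rule coord_indep[OF PN sN]) (use ln in auto)
  have ir: "P.indep_var (PiM G (\<lambda>_. borel)) (\<lambda>\<omega>. restrict (\<lambda>i. \<omega> i) G) (PiM E (\<lambda>_. borel)) (\<lambda>\<omega>. restrict (\<lambda>i. \<omega> i) E)"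
    by (rule P.indep_var_restrict[OF ind]) (use ln in \<open>auto simp: G_def E_def\<close>)
  have eH1: "(\<lambda>x::nat\<Rightarrow>real. if c < (\<Sum>k\<in>G. x k) then x j else 0) \<circ> (\<lambda>\<omega>. restrict (\<lambda>i. \<omega> i) G) = H1"
    using jG by (auto simp: fun_eq_iff H1_def intro!: sum.cong)
  have eH2: "(\<lambda>x::nat\<Rightarrow>real. if c < (\<Sum>k\<in>G. x k) then 0 else x j) \<circ> (\<lambda>\<omega>. restrict (\<lambda>i. \<omega> i) G) = H2"
    using jG by (auto simp: fun_eq_iff H2_def intro!: sum.cong)
  have cE: "\<And>\<omega>::nat\<Rightarrow>real. {i \<in> E. 0 < restrict (\<lambda>i. \<omega> i) E i} = {i \<in> E. 0 < \<omega> i}" by auto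
  have eA: "(\<lambda>x::nat\<Rightarrow>real. if \<gamma> * real n < real (card {i \<in> E. 0 < x i}) then 1 else (0::real)) \<circ> (\<lambda>\<omega>. restrict (\<lambda>i. \<omega> i) E) = A"
    unfolding comp_def A_def cE ..
  have eB: "(\<lambda>x::nat\<Rightarrow>real. if \<alpha> * real n < real (card {i \<in> E. 0 < x i}) then 1 else (0::real)) \<circ> (\<lambda>\<omega>. restrict (\<lambda>i. \<omega> i) E) = B"
    unfolding comp_def B_def cE ..
  have iA: "P.indep_var borel H1 borel A"
    using P.indep_var_compose[OF ir h1G aE] unfolding eH1 eA .
  have iB: "P.indep_var borel H2 borel B"
    using P.indep_var_compose[OF ir h2G bE] unfolding eH2 eB .
  have cd: "distributed M lborel (\<lambda>\<omega>. \<omega> j) (normal_density \<mu> \<sigma>)"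
  proof -
    interpret PP: product_prob_space "\<lambda>_. N" "{..<n}"
      using PN by (simp add: product_prob_space_def product_prob_space_axioms_def product_sigma_finite_def prob_space_imp_sigma_finite)
    have "distr M lborel (\<lambda>\<omega>. \<omega> j) = distr M N (\<lambda>\<omega>. \<omega> j)"
      by (rule distr_cong) (simp_all add: sN)
    also have "\<dots> = N" unfolding M_def by (rule PP.PiM_component) (use jI in simp)
    finally show ?thesis
      unfolding distributed_def using mcb[of j] assms by (simp add: N_def)
  qed
  have cj: "integrable M (\<lambda>\<omega>. \<omega> j)"
    using distributed_integrable[OF cd, of "\<lambda>x. x"] integrable_normal_moment_nz_1[OF s] by simp
  have Ej: "(\<integral>\<omega>. \<omega> j \<partial>M) = \<mu>"
    by (rule P.normal_distributed_expectation[OF s cd])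
  have iH1: "integrable M H1"
    by (rule Bochner_Integration.integrable_bound[OF cj H1m]) (auto simp: H1_def)
  have iH2: "integrable M H2"
    by (rule Bochner_Integration.integrable_bound[OF cj H2m]) (auto simp: H2_def)
  have iA': "integrable M A"
    by (rule P.integrable_const_bound[where B=1, OF _ Am]) (auto simp: A_def)
  have iB': "integrable M B"
    by (rule P.integrable_const_bound[where B=1, OF _ Bm]) (auto simp: B_def)
  have E1: "(\<integral>\<omega>. H1 \<omega> * A \<omega> \<partial>M) = integral\<^sup>L M H1 * integral\<^sup>L M A"
    by (rule P.indep_var_lebesgue_integral[OF iA iH1 iA'])
  have E2: "(\<integral>\<omega>. H2 \<omega> * B \<omega> \<partial>M) = integral\<^sup>L M H2 * integral\<^sup>L M B"
    by (rule P.indep_var_lebesgue_integral[OF iB iH2 iB'])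
  have I1: "integrable M (\<lambda>\<omega>. H1 \<omega> * A \<omega>)" by (rule P.indep_var_integrable[OF iA iH1 iA'])
  have I2: "integrable M (\<lambda>\<omega>. H2 \<omega> * B \<omega>)" by (rule P.indep_var_integrable[OF iB iH2 iB'])
  have "integral\<^sup>L M (vise_increment n l \<alpha> t j) = (\<integral>\<omega>. H1 \<omega> * A \<omega> + H2 \<omega> * B \<omega> \<partial>M)"
    by (intro Bochner_Integration.integral_cong) (simp_all add: dec)
  also have "\<dots> = integral\<^sup>L M H1 * integral\<^sup>L M A + integral\<^sup>L M H2 * integral\<^sup>L M B"
    using I1 I2 E1 E2 by simp
  finally have main: "integral\<^sup>L M (vise_increment n l \<alpha> t j) = integral\<^sup>L M H1 * integral\<^sup>L M A + integral\<^sup>L M H2 * integral\<^sup>L M B" .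
  have EA: "integral\<^sup>L M A = F_xi l p (\<gamma> * real n)"
    unfolding A_def M_def N_def E_def p_def using ego_exp[OF s, of l n] ln by simp
  have EB: "integral\<^sup>L M B = F_xi l p (\<alpha> * real n)"
    unfolding B_def M_def N_def E_def p_def using ego_exp[OF s, of l n] ln by simp
  have sg: "sqrt (real g) * sqrt (real g) = real g" by simp
  have sg0: "sqrt (real g) > 0" using g0 by simp
  have e1: "real g * \<mu> - c = sqrt (real g) * (sqrt (real g) * (\<mu> - t))"
    unfolding c_def by (simp add: right_diff_distrib mult.commute[of t] flip: mult.assoc)
  have yy: "(real g * \<mu> - c) / (\<sigma> * sqrt (real g)) = y"
    unfolding y_def e1 using s sg0 by (simp add: field_simps)
  have aux: "\<And>r a b. r > 0 \<Longrightarrow> (r * r * a + b * r) / (r * r) = a + b / (r::real)"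
    by (simp add: field_simps)
  have EH1: "integral\<^sup>L M H1 = \<mu> * Phi y + \<sigma> * phi y / sqrt (real g)"
  proof -
    have "integral\<^sup>L M H1 = (real g * \<mu> * Phi y + \<sigma> * sqrt (real g) * phi y) / real g"
      using group_exp[OF s ln assms(6,7), where \<mu>=\<mu> and c=c] unfolding H1_def M_def N_def G_def yy[unfolded g_def] g_def .
    also have "\<dots> = \<mu> * Phi y + \<sigma> * phi y / sqrt (real g)"
      using aux[OF sg0, of "\<mu> * Phi y" "\<sigma> * phi y"] unfolding sg by (simp add: ac_simps)
    finally show ?thesis .
  qed
  have EH2: "integral\<^sup>L M H2 = \<mu> * (1 - Phi y) - \<sigma> * phi y / sqrt (real g)"
  proof -
    have "integral\<^sup>L M H2 = (\<integral>\<omega>. \<omega> j - H1 \<omega> \<partial>M)"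
      by (intro Bochner_Integration.integral_cong) (auto simp: H1_def H2_def)
    also have "\<dots> = \<mu> - integral\<^sup>L M H1" using cj iH1 Ej by simp
    finally show ?thesis using EH1 by (simp add: algebra_simps)
  qed
  have final: "integral\<^sup>L M (vise_increment n l \<alpha> t j) = F_xi l p (\<gamma> * real n) * (\<mu> * Phi y + \<sigma> * phi y / sqrt (real g))
      + F_xi l p (\<alpha> * real n) * (\<mu> * (1 - Phi y) - \<sigma> * phi y / sqrt (real g))"
    using main EA EB EH1 EH2 by simp
  show ?thesis
    unfolding Let_def vise_proposal_def using final[unfolded M_def N_def p_def y_def \<gamma>_def g_def] .
qed


end
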